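(* There exists a curve $\Gamma$ in the Euclidean plane $\mathbb{R}^2$ such that $\mathcal{H}^1(\Gamma)<\infty$ and $S_{\Gamma,2-\epsilon}(\mathscr{G})=\infty$ for every multiresolution family $\mathscr{G}$ for $\Gamma$ (of any inflation factor $>1$) and every $\epsilon\in(0,2)$.
   Context: $\mathbb{R}^2$ carries the Euclidean norm. For a nonempty set $E\subset\mathbb{R}^2$ and a set $Q$ of positive diameter, the Jones beta number is $\beta_E(Q)=\inf_L\sup_{x\in E\cap Q}\mathrm{dist}(x,L)/\mathrm{diam}\,Q$ if $E\cap Q\neq\emptyset$, where $L$ ranges over all lines, and $\beta_E(Q)=0$ if $E\cap Q=\emptyset$. For $\rho>0$, a $\rho$-net for $E$ is a set $X\subset E$ such that $|y-z|\geq\rho$ for all distinct $y,z\in X$ and $\mathrm{dist}(x,X)<\rho$ for all $x\in E$. A multiresolution family for $E$ with inflation factor $A>1$ is the collection of closed balls $\mathscr{G}=\{B(x,A2^{-k}):x\in X_k,\ k\in\mathbb{Z}\}$ (indexed by the pairs $(k,x)$), where $(X_k)_{k\in\mathbb{Z}}$ is a nested family ($X_k\subset X_{k+1}$) and each $X_k$ is a $2^{-k}$-net for $E$. For $0<r<\infty$, $S_{E,r}(\mathscr{G})=\mathrm{diam}\,E+\sum_{Q\in\mathscr{G}}\beta_E(Q)^r\,\mathrm{diam}\,Q$. A curve is the image of a continuous map from $[0,1]$. *)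

theory Defs
  imports "HOL-Analysis.Analysis"
begin

type_synonym plane = "real ^ 2"

definition hausdorff_pre1 :: "real \<Rightarrow> plane set \<Rightarrow> ennreal" where
  "hausdorff_pre1 \<delta> E =
     (INF U \<in> {U :: nat \<Rightarrow> plane set. E \<subseteq> (\<Union>i. U i) \<and>
                 (\<forall>i. bounded (U i) \<and> diameter (U i) \<le> \<delta>)}.
        (\<Sum>i. ennreal (diameter (U i))))"

definition hausdorff1 :: "plane set \<Rightarrow> ennreal" where
  "hausdorff1 E = (SUP \<delta> \<in> {0<..}. hausdorff_pre1 \<delta> E)"

definition is_line :: "plane set \<Rightarrow> bool" where
  "is_line L \<longleftrightarrow> (\<exists>a v. v \<noteq> 0 \<and> L = {a + t *\<^sub>R v | t. True})"

definition jones_beta :: "plane set \<Rightarrow> plane set \<Rightarrow> real" where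
  "jones_beta E Q =
     (if E \<inter> Q = {} then 0
      else (INF L \<in> {L. is_line L}. (SUP x \<in> E \<inter> Q. infdist x L)) / diameter Q)"

definition is_net :: "real \<Rightarrow> plane set \<Rightarrow> plane set \<Rightarrow> bool" where
  "is_net \<rho> E X \<longleftrightarrow> X \<subseteq> E \<and> (\<forall>y\<in>X. \<forall>z\<in>X. y \<noteq> z \<longrightarrow> dist y z \<ge> \<rho>)
                        \<and> (\<forall>x\<in>E. \<exists>y\<in>X. dist x y < \<rho>)"

text \<open>A nested family of nets; the multiresolution family with inflation factor A
  is then the family of balls cball x (A * 2^-k), x in X k, indexed by (k,x).\<close>
definition nested_nets :: "plane set \<Rightarrow> (int \<Rightarrow> plane set) \<Rightarrow> bool" where
  "nested_nets E X \<longleftrightarrow> (\<forall>k. X k \<subseteq> X (k + 1)) \<and> (\<forall>k. is_net (2 powr (- real_of_int k)) E (X k))"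

definition S_sum :: "plane set \<Rightarrow> real \<Rightarrow> real \<Rightarrow> (int \<Rightarrow> plane set) \<Rightarrow> ennreal" where
  "S_sum E r A X = ennreal (diameter E) +
     (\<Sum>\<^sub>\<infinity> (k, x) \<in> Sigma UNIV X.
        ennreal (jones_beta E (cball x (A * 2 powr (- real_of_int k))) powr r
                 * diameter (cball x (A * 2 powr (- real_of_int k)))))"

end

theory Submission
  imports Defs "HOL-Real_Asymp.Real_Asymp"
begin

definition TT :: "real \<Rightarrow> real" where "TT y = infdist y \<int>"
lemma TT_nonneg: "0 \<le> TT y" by (simp add: TT_def infdist_nonneg)

lemma TT_le_half: "TT y \<le> 1/2"
proof -
  have "TT y \<le> dist y (of_int (round y))" unfolding TT_def by (rule infdist_le) simp
  also have "\<dots> \<le> 1/2" using of_int_round_abs_le[of y] by (simp add: dist_real_def abs_minus_commute)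
  finally show ?thesis .
qed

lemma TT_lip: "\<bar>TT x - TT y\<bar> \<le> \<bar>x - y\<bar>"
  using infdist_triangle_abs[of x \<int> y] by (simp add: TT_def dist_real_def)
lemma TT_up: assumes "n \<in> \<int>" "0 \<le> t" "t \<le> 1/2" shows "TT (n + t) = t"
proof (rule antisym)
  show "TT (n + t) \<le> t" unfolding TT_def using infdist_le[OF assms(1), of "n+t"] assms by (simp add: dist_real_def)
  have ne: "(\<int>::real set) \<noteq> {}" using assms(1) by auto
  have "t \<le> dist (n+t) m" if mI: "m \<in> \<int>" for m
  proof -
    obtain n' where n': "n = of_int n'" using assms(1) by (auto elim: Ints_cases)
    obtain m' where m': "m = of_int m'" using mI by (auto elim: Ints_cases)
    show ?thesis
    proof (cases "m' \<le> n'")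
      case True then have "m \<le> n" using n' m' by simp
      then show ?thesis using assms by (simp add: dist_real_def)
    next
      case False then have "m' \<ge> n' + 1" by simp
      then have "m \<ge> n + 1" unfolding n' m' by linarith
      then show ?thesis using assms by (simp add: dist_real_def)
    qed
  qed
  then show "t \<le> TT (n + t)" unfolding TT_def infdist_notempty[OF ne]
    by (intro cINF_greatest ne) auto
qed
lemma TT_down: assumes "n \<in> \<int>" "0 \<le> t" "t \<le> 1/2" shows "TT (n - t) = t"
proof (rule antisym)
  show "TT (n - t) \<le> t" unfolding TT_def using infdist_le[OF assms(1), of "n-t"]
    using assms by (simp add: dist_real_def)
  show "t \<le> TT (n - t)" unfolding TT_def
  proof -
    have "(\<int>::real set) \<noteq> {}" using assms(1) by auto
    have "t \<le> dist (n-t) m" if mI: "m \<in> \<int>" for m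
    proof -
      obtain n' where n': "n = of_int n'" using assms(1) by (auto elim: Ints_cases)
      obtain m' where m': "m = of_int m'" using mI by (auto elim: Ints_cases)
      show ?thesis
      proof (cases "m' \<ge> n'")
        case True then have "m \<ge> n" using n' m' by simp
        then show ?thesis using assms by (simp add: dist_real_def)
      next
        case False then have "m' \<le> n' - 1" by simp
        then have "m \<le> n - 1" unfolding n' m' by linarith
        then show ?thesis using assms by (simp add: dist_real_def)
      qed
    qed
    then show "t \<le> infdist (n - t) \<int>" using \<open>(\<int>::real set) \<noteq> {}\<close>
      unfolding infdist_notempty[OF \<open>(\<int>::real set) \<noteq> {}\<close>] by (intro cINF_greatest) auto
  qed
qed

lemma TT_int: "n \<in> \<int> \<Longrightarrow> TT n = 0"
  using TT_up[of n 0] by simp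

definition aa :: "nat \<Rightarrow> real" where "aa j = 1 / (sqrt (real j + 3) * ln (real j + 3))"

lemma aa_pos: "0 < aa j"
  unfolding aa_def by (simp add: ln_gt_zero)

lemma aa_le1: "aa j \<le> 1"
proof -
  have "ln (real j + 3) \<ge> 1"
    using ln_ge_iff[of "real j + 3" 1] exp_le by auto
  moreover have "sqrt (real j + 3) \<ge> 1" by simp
  ultimately have "sqrt (real j + 3) * ln (real j + 3) \<ge> 1"
    by (metis mult_mono' mult_1 order_trans zero_le_one)
  then show ?thesis unfolding aa_def by simp
qed

lemma aa_sq: "(aa j)^2 \<le> 1 / ln (real j + 2) - 1 / ln (real j + 3)"
proof -
  define x where "x = real j + 2"
  have x2: "x \<ge> 2" unfolding x_def by simp
  have l1: "ln x > 0" "ln (x+1) > 0" using x2 by (auto simp: ln_gt_zero)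
  have "ln (x / (x+1)) \<le> x/(x+1) - 1" using x2 by (intro ln_le_minus_one) auto
  also have "\<dots> = - 1/(x+1)" using x2 by (simp add: field_simps)
  finally have "ln x - ln (x+1) \<le> - 1/(x+1)" using x2 by (simp add: ln_div)
  hence d: "1/(x+1) \<le> ln (x+1) - ln x" by simp
  have mono: "ln x \<le> ln (x+1)" using x2 by simp
  have "(aa j)^2 = 1 / ((x+1) * (ln (x+1))^2)"
    proof -
    have "x + 1 = real j + 3" unfolding x_def by simp
    then show ?thesis unfolding aa_def using x2 by (simp add: power_mult_distrib power_divide add.commute)
  qed
  also have "\<dots> \<le> (ln (x+1) - ln x) / (ln x * ln (x+1))"
  proof -
    have "1 / ((x+1) * (ln (x+1))^2) = (1/(x+1)) / (ln (x+1) * ln (x+1))" by (simp add: power2_eq_square)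
    also have "\<dots> \<le> (ln (x+1) - ln x) / (ln (x+1) * ln (x+1))"
      using d l1 by (intro divide_right_mono) auto
    also have "\<dots> \<le> (ln (x+1) - ln x) / (ln x * ln (x+1))"
      using l1 mono d x2 by (intro divide_left_mono mult_right_mono mult_pos_pos) auto
    finally show ?thesis .
  qed
  also have "\<dots> = 1 / ln x - 1 / ln (x+1)" using l1 by (simp add: field_simps)
  finally show ?thesis unfolding x_def by (simp add: add.assoc)
qed

lemma aa_sq_sum: "(\<Sum>l<J. (aa l)^2) \<le> 2"
proof -
  have "(\<Sum>l<J. (aa l)^2) \<le> 1 / ln 2 - 1 / ln (real J + 2)"
  proof (induction J)
    case 0 then show ?case by simp
  next
    case (Suc J)
    then show ?case using aa_sq[of J] by (simp add: add.commute add.left_commute)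
  qed
  also have "\<dots> \<le> 1 / ln 2" using ln_gt_zero[of "real J + 2"] by simp
  also have "\<dots> \<le> 2" using ln2_ge_two_thirds by (simp add: field_simps)
  finally show ?thesis .
qed


definition tm :: "nat \<Rightarrow> real \<Rightarrow> real" where "tm l x = aa l / 2^l * TT (2^l * x)"
definition ff :: "real \<Rightarrow> real" where "ff x = (\<Sum>l. tm l x)"
definition fJ :: "nat \<Rightarrow> real \<Rightarrow> real" where "fJ J x = (\<Sum>l<J. tm l x)"
fun sl :: "nat \<Rightarrow> nat \<Rightarrow> real" where
  "sl 0 i = 0"
| "sl (Suc J) i = sl J (i div 2) + (if even i then aa J else - aa J)"

lemma tm_nonneg: "0 \<le> tm l x"
  unfolding tm_def using aa_pos[of l] TT_nonneg by simp

lemma tm_le: "tm l x \<le> (1/2)^l / 2"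
proof -
  have "tm l x = aa l * TT (2^l * x) / 2^l" unfolding tm_def by simp
  also have "\<dots> \<le> 1 * (1/2) / 2^l"
    using aa_le1[of l] aa_pos[of l] TT_le_half TT_nonneg
    by (intro divide_right_mono mult_mono) auto
  finally show ?thesis by (simp add: power_divide)
qed

lemma summable_half: "summable (\<lambda>l::nat. (1/2::real)^l / 2)"
  by (intro summable_divide summable_geometric) simp

lemma summable_tm: "summable (\<lambda>l. tm l x)"
  by (rule summable_comparison_test[OF _ summable_half]) (use tm_nonneg tm_le in auto)

lemma tm_cont: "continuous_on UNIV (tm l)"
  unfolding tm_def TT_def by (intro continuous_intros)

lemma ff_cont: "continuous_on UNIV ff"
proof -
  have "uniform_limit UNIV (\<lambda>n x. \<Sum>i<n. tm i x) (\<lambda>x. suminf (\<lambda>i. tm i x)) sequentially"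
    by (rule Weierstrass_m_test[OF _ summable_half]) (use tm_nonneg tm_le in auto)
  then show ?thesis unfolding ff_def
    by (intro uniform_limit_theorem[where F=sequentially]) (auto intro!: always_eventually continuous_on_sum tm_cont)
qed

lemma ff_split: "ff x = fJ J x + (\<Sum>l. tm (l + J) x)"
  unfolding ff_def fJ_def using suminf_split_initial_segment[OF summable_tm, of x J] by simp

lemma tail_bounds: "0 \<le> (\<Sum>l. tm (l + J) x)" "(\<Sum>l. tm (l + J) x) \<le> (1/2)^J"
proof -
  have s: "summable (\<lambda>l. tm (l + J) x)" using summable_ignore_initial_segment[OF summable_tm[of x], of J] .
  show "0 \<le> (\<Sum>l. tm (l + J) x)" using s tm_nonneg by (intro suminf_nonneg) auto
  have s2: "summable (\<lambda>l. (1/2)^J * ((1/2::real)^l / 2))" using summable_half by (intro summable_mult)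
  have "(\<Sum>l. tm (l + J) x) \<le> (\<Sum>l. (1/2)^J * ((1/2::real)^l / 2))"
  proof (intro suminf_le s s2 allI)
    fix n
    have "tm (n + J) x \<le> (1/2)^(n+J) / 2" by (rule tm_le)
    then show "tm (n + J) x \<le> (1/2)^J * ((1/2::real)^n / 2)" by (simp add: power_add mult.commute)
  qed
  also have "\<dots> = (1/2)^J * (\<Sum>l. (1/2::real)^l / 2)" using summable_half by (rule suminf_mult)
  also have "(\<Sum>l. (1/2::real)^l / 2) = 1"
    using suminf_divide[OF summable_geometric[of "1/2::real"], of 2] suminf_geometric[of "1/2::real"] by simp
  finally show "(\<Sum>l. tm (l + J) x) \<le> (1/2)^J" by simp
qed

lemma tm_dyadic_zero: assumes "J \<le> l" shows "tm l (real i / 2^J) = 0"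
proof -
  obtain d where d: "l = J + d" using assms le_Suc_ex by blast
  have "(2::real)^l * (real i / 2^J) = real (i * 2^d)"
    unfolding d by (simp add: power_add)
  then show ?thesis unfolding tm_def by (simp add: TT_int)
qed

lemma ff_dyadic: "ff (real i / 2^J) = fJ J (real i / 2^J)"
  unfolding ff_def fJ_def
  by (rule suminf_finite[of "{..<J}"]) (auto simp: tm_dyadic_zero)

lemma fJ_Suc: "fJ (Suc J) x = fJ J x + tm J x" unfolding fJ_def by simp

lemma tm_affine:
  assumes "real i / 2^(Suc J) \<le> x" "x \<le> (real i + 1) / 2^(Suc J)"
          "real i / 2^(Suc J) \<le> y" "y \<le> (real i + 1) / 2^(Suc J)"
  shows "tm J x - tm J y = (if even i then aa J else - aa J) * (x - y)"
proof (cases "even i")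
  case True
  then obtain k where k: "i = 2*k" by auto
  have T: "TT (2^J * z) = 2^J * z - real k" if "real i / 2^(Suc J) \<le> z" "z \<le> (real i + 1) / 2^(Suc J)" for z
  proof -
    have "0 \<le> 2^J * z - real k" "2^J * z - real k \<le> 1/2" using that k by (auto simp: field_simps)
    then have "TT (real k + (2^J * z - real k)) = 2^J * z - real k" by (intro TT_up) auto
    then show ?thesis by simp
  qed
  have "tm J x - tm J y = aa J / 2^J * (TT (2^J*x) - TT (2^J*y))" by (simp add: tm_def algebra_simps)
  also have "\<dots> = aa J * (x - y)" unfolding T[OF assms(1,2)] T[OF assms(3,4)] by (simp add: field_simps)
  finally show ?thesis using True by simp
next
  case False
  then obtain k where k: "i = 2*k+1" using oddE by blast
  have T: "TT (2^J * z) = real k + 1 - 2^J * z" if "real i / 2^(Suc J) \<le> z" "z \<le> (real i + 1) / 2^(Suc J)" for z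
  proof -
    have "0 \<le> real k + 1 - 2^J * z" "real k + 1 - 2^J * z \<le> 1/2" using that k by (auto simp: field_simps)
    then have "TT ((real k + 1) - (real k + 1 - 2^J * z)) = real k + 1 - 2^J * z" by (intro TT_down) auto
    then show ?thesis by simp
  qed
  have "tm J x - tm J y = aa J / 2^J * (TT (2^J*x) - TT (2^J*y))" by (simp add: tm_def algebra_simps)
  also have "\<dots> = - aa J * (x - y)" unfolding T[OF assms(1,2)] T[OF assms(3,4)] by (simp add: field_simps)
  finally show ?thesis using False by simp
qed

lemma fJ_affine:
  assumes "real i / 2^J \<le> x" "x \<le> (real i + 1) / 2^J" "real i / 2^J \<le> y" "y \<le> (real i + 1) / 2^J"
  shows "fJ J x - fJ J y = sl J i * (x - y)"
  using assms
proof (induction J arbitrary: i)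
  case 0 then show ?case by (simp add: fJ_def)
next
  case (Suc J)
  have h1: "real (i div 2) / 2^J \<le> real i / 2^(Suc J)"
  proof -
    have "real (i div 2) * 2 \<le> real i" by linarith
    then show ?thesis by (simp add: field_simps)
  qed
  have h2: "(real i + 1) / 2^(Suc J) \<le> (real (i div 2) + 1) / 2^J"
  proof -
    have "i + 1 \<le> (i div 2 + 1) * 2" by presburger
    then have "real (i + 1) \<le> real ((i div 2 + 1) * 2)" by (simp only: of_nat_le_iff)
    then have "real i + 1 \<le> (real (i div 2) + 1) * 2" by simp
    then have "(real i + 1) / 2^(Suc J) \<le> ((real (i div 2) + 1) * 2) / 2^(Suc J)"
      by (rule divide_right_mono) simp
    also have "((real (i div 2) + 1) * 2) / 2^(Suc J) = (real (i div 2) + 1) / 2^J"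
      by (simp add: field_simps)
    finally show ?thesis .
  qed
  have "fJ J x - fJ J y = sl J (i div 2) * (x - y)"
    using Suc.prems h1 h2 by (intro Suc.IH) auto
  then show ?case using tm_affine[OF Suc.prems] by (simp add: fJ_Suc algebra_simps)
qed


lemma sum_even_odd: "(\<Sum>i<2*n. F i) = (\<Sum>i<n. F (2*i) + F (2*i+1))" for F :: "nat \<Rightarrow> real"
  by (induction n) (auto simp: algebra_simps)

lemma sl_sq_sum: "(\<Sum>i<2^J. (sl J i)^2) = 2^J * (\<Sum>l<J. (aa l)^2)"
proof (induction J)
  case 0 then show ?case by simp
next
  case (Suc J)
  have "(\<Sum>i<2^Suc J. (sl (Suc J) i)^2) = (\<Sum>i<2^J. (sl (Suc J) (2*i))^2 + (sl (Suc J) (2*i+1))^2)"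
    using sum_even_odd[of "\<lambda>i. (sl (Suc J) i)^2" "2^J"] by simp
  also have "\<dots> = (\<Sum>i<2^J. 2 * (sl J i)^2 + 2 * (aa J)^2)"
    by (intro sum.cong) (auto simp: power2_eq_square algebra_simps)
  also have "\<dots> = 2 * (\<Sum>i<2^J. (sl J i)^2) + 2^J * 2 * (aa J)^2"
    by (simp add: sum.distrib sum_distrib_left)
  finally show ?case using Suc.IH by (simp add: algebra_simps)
qed

lemma sl_bound: "\<bar>sl J i\<bar> \<le> real J"
proof (induction J arbitrary: i)
  case 0 then show ?case by simp
next
  case (Suc J)
  have h: "-real J \<le> sl J (i div 2)" "sl J (i div 2) \<le> real J" using Suc.IH[of "i div 2"] by auto
  then show ?case using aa_le1[of J] aa_pos[of J] by (auto simp: abs_le_iff)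
qed

lemma diverge:
  assumes "0 < r" "r < 2" "C > 0"
  shows "\<exists>N. B \<le> (\<Sum>j<N. (C * aa j) powr r)"
proof (rule ccontr)
  assume "\<not> ?thesis"
  then have b: "\<And>N. (\<Sum>j<N. (C * aa j) powr r) \<le> B" by (auto simp: not_le intro: less_imp_le)
  have s: "summable (\<lambda>j. (C * aa j) powr r)"
    by (rule summableI_nonneg_bounded[OF _ b]) simp
  have ev: "eventually (\<lambda>j::nat. 1/(real j+3) \<le> (C / (sqrt (real j + 3) * ln (real j + 3))) powr r) sequentially"
    using assms by real_asymp
  have "summable (\<lambda>j::nat. 1/(real j+3))"
  proof (rule summable_comparison_test_ev[OF _ s])
    show "eventually (\<lambda>j. norm (1/(real j+3)) \<le> (C * aa j) powr r) sequentially"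
      using ev by eventually_elim (simp add: aa_def)
  qed
  then have "summable (\<lambda>j::nat. inverse (real (j + 3)))" by (simp add: inverse_eq_divide add.commute)
  then have "summable (\<lambda>j::nat. inverse (real j))" by (subst (asm) summable_iff_shift)
  then show False using not_summable_harmonic[where 'a=real] by simp
qed

lemma norm2: "norm (x::real^2) = sqrt ((x$1)^2 + (x$2)^2)"
  by (simp add: norm_vec_def L2_set_def sum_2)

lemma inner2: "inner (x::real^2) y = x$1 * y$1 + x$2 * y$2"
  by (simp add: inner_vec_def sum_2)

lemma norm2_sq: "(norm (x::real^2))^2 = (x$1)^2 + (x$2)^2"
  by (simp add: norm2)

definition det2 :: "real^2 \<Rightarrow> real^2 \<Rightarrow> real" where "det2 u w = u$1 * w$2 - u$2 * w$1"

definition rot :: "real^2 \<Rightarrow> real^2" where "rot v = vector [- v$2, v$1]"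

lemma infdist_line_lower:
  assumes "L = {a + t *\<^sub>R v | t. True}" "v \<noteq> 0"
  shows "\<bar>inner (x - a) (rot v)\<bar> \<le> infdist x L * norm v"
proof -
  have ne: "L \<noteq> {}" using assms by auto
  have nv: "norm (rot v) = norm v" unfolding rot_def by (simp add: norm2 add.commute)
  have "\<bar>inner (x - a) (rot v)\<bar> / norm v \<le> dist x z" if "z \<in> L" for z
  proof -
    obtain t where z: "z = a + t *\<^sub>R v" using \<open>z \<in> L\<close> assms by auto
    have "inner v (rot v) = 0" unfolding rot_def by (simp add: inner2)
    then have "inner (x - a) (rot v) = inner (x - z) (rot v)"
      unfolding z by (simp add: inner_diff_left inner_add_left)
    also have "\<bar>\<dots>\<bar> \<le> norm (x - z) * norm (rot v)" by (rule Cauchy_Schwarz_ineq2)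
    finally show ?thesis using assms(2) nv by (simp add: dist_norm divide_le_eq)
  qed
  then have "\<bar>inner (x - a) (rot v)\<bar> / norm v \<le> infdist x L"
    unfolding infdist_notempty[OF ne] by (intro cINF_greatest ne) auto
  then show ?thesis using assms(2) by (simp add: divide_le_eq)
qed

lemma det_identity:
  "det2 u w * (norm v)^2 = inner u v * inner w (rot v) - inner u (rot v) * inner w v"
  unfolding det2_def rot_def norm2_sq by (simp add: inner2 algebra_simps power2_eq_square)

lemma line_det_bound:
  assumes "is_line L" "infdist x1 L \<le> M" "infdist x2 L \<le> M" "infdist x3 L \<le> M"
  shows "\<bar>det2 (x2 - x1) (x3 - x1)\<bar> \<le> 2 * M * (norm (x2 - x1) + norm (x3 - x1))"
proof -
  obtain a v where L: "v \<noteq> 0" "L = {a + t *\<^sub>R v | t. True}" using assms(1) unfolding is_line_def by auto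
  define n where "n = rot v"
  have nv: "0 < norm v" using L by simp
  have b: "\<bar>inner (x - a) n\<bar> \<le> M * norm v" if "infdist x L \<le> M" for x
    using infdist_line_lower[OF L(2,1), of x] that nv unfolding n_def
    by (meson mult_right_mono norm_ge_zero order_trans)
  have u1: "\<bar>inner (x2 - x1) n\<bar> \<le> 2 * M * norm v"
    using b[OF assms(2)] b[OF assms(3)] by (simp add: inner_diff_left abs_le_iff)
  have u2: "\<bar>inner (x3 - x1) n\<bar> \<le> 2 * M * norm v"
    using b[OF assms(2)] b[OF assms(4)] by (simp add: inner_diff_left abs_le_iff)
  have c1: "\<bar>inner (x2 - x1) v\<bar> \<le> norm (x2 - x1) * norm v" by (rule Cauchy_Schwarz_ineq2)
  have c2: "\<bar>inner (x3 - x1) v\<bar> \<le> norm (x3 - x1) * norm v" by (rule Cauchy_Schwarz_ineq2)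
  have "\<bar>det2 (x2 - x1) (x3 - x1)\<bar> * (norm v)^2
      = \<bar>inner (x2 - x1) v * inner (x3 - x1) n - inner (x2 - x1) n * inner (x3 - x1) v\<bar>"
  proof -
    have "\<bar>det2 (x2 - x1) (x3 - x1)\<bar> * (norm v)^2 = \<bar>det2 (x2 - x1) (x3 - x1) * (norm v)^2\<bar>"
      by (simp add: abs_mult)
    then show ?thesis using det_identity[of "x2 - x1" "x3 - x1" v] unfolding n_def by simp
  qed
  also have "\<dots> \<le> \<bar>inner (x2 - x1) v\<bar> * \<bar>inner (x3 - x1) n\<bar> + \<bar>inner (x2 - x1) n\<bar> * \<bar>inner (x3 - x1) v\<bar>"
    by (simp add: abs_mult[symmetric] abs_triangle_ineq4)
  also have "\<dots> \<le> (norm (x2 - x1) * norm v) * (2 * M * norm v) + (2 * M * norm v) * (norm (x3 - x1) * norm v)"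
    using order_trans[OF infdist_nonneg assms(2)] by (intro add_mono mult_mono c1 c2 u1 u2) auto
  also have "\<dots> = (2 * M * (norm (x2 - x1) + norm (x3 - x1))) * (norm v)^2"
    by (simp add: algebra_simps power2_eq_square)
  finally show ?thesis using nv by simp
qed


lemma some_line: "is_line {0 + t *\<^sub>R (axis 1 1 :: real^2) | t. True}"
  unfolding is_line_def by (rule exI[of _ 0], rule exI[of _ "axis 1 1"]) (simp add: axis_eq_0_iff)

lemma beta_lower:
  fixes E :: "plane set"
  assumes "x1 \<in> E" "x2 \<in> E" "x3 \<in> E" "x1 \<in> cball y \<rho>" "x2 \<in> cball y \<rho>" "x3 \<in> cball y \<rho>" "\<rho> > 0"
    "D0 \<le> \<bar>det2 (x2 - x1) (x3 - x1)\<bar>" "norm (x2 - x1) + norm (x3 - x1) \<le> P" "P > 0"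
  shows "D0 / (2*P) / (2*\<rho>) \<le> jones_beta E (cball y \<rho>)"
proof -
  define Q where "Q = cball y \<rho>"
  have ne: "E \<inter> Q \<noteq> {}" using assms unfolding Q_def by auto
  have lne: "{L. is_line L} \<noteq> {}" using some_line by blast
  have "D0 / (2*P) \<le> (SUP x \<in> E \<inter> Q. infdist x L)" if L: "is_line L" for L
  proof -
    obtain a v where Lav: "L = {a + t *\<^sub>R v | t. True}" using L unfolding is_line_def by auto
    have z0: "a \<in> L" unfolding Lav by (auto intro: exI[of _ 0])
    have bdd: "bdd_above ((\<lambda>x. infdist x L) ` (E \<inter> Q))"
    proof (rule bdd_aboveI2)
      fix x assume "x \<in> E \<inter> Q"
      then have "dist y x \<le> \<rho>" unfolding Q_def by auto
      then show "infdist x L \<le> \<rho> + dist y a"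
        using infdist_le[OF z0, of x] dist_triangle[of x a y] by (simp add: dist_commute)
    qed
    define M where "M = (SUP x \<in> E \<inter> Q. infdist x L)"
    have m: "infdist x L \<le> M" if "x \<in> E \<inter> Q" for x
      unfolding M_def using bdd that by (rule cSUP_upper2) simp
    have "D0 \<le> 2 * M * (norm (x2 - x1) + norm (x3 - x1))"
      using line_det_bound[OF L m m m] assms unfolding Q_def by fastforce
    also have "\<dots> \<le> 2 * M * P"
      using assms(9) m[of x1] infdist_nonneg[of x1 L] assms(1,4) unfolding Q_def
      by (intro mult_left_mono) auto
    finally have "D0 \<le> 2 * M * P" .
    then show ?thesis unfolding M_def using assms(10) by (simp add: divide_le_eq mult.commute mult.left_commute)
  qed
  then have "D0 / (2*P) \<le> (INF L \<in> {L. is_line L}. (SUP x \<in> E \<inter> Q. infdist x L))"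
    by (intro cINF_greatest lne) auto
  then have h: "D0 / (2*P) / (2*\<rho>) \<le> (INF L \<in> {L. is_line L}. (SUP x \<in> E \<inter> Q. infdist x L)) / (2*\<rho>)"
    by (rule divide_right_mono) (use assms(7) in simp)
  have "diameter Q = 2 * \<rho>" unfolding Q_def using assms(7) by simp
  then have "D0 / (2*P) / (2*\<rho>) \<le> (INF L \<in> {L. is_line L}. (SUP x \<in> E \<inter> Q. infdist x L)) / diameter Q"
    using h by (simp only:)
  then show ?thesis using ne unfolding jones_beta_def Q_def by simp
qed


definition gg :: "real \<Rightarrow> plane" where "gg t = vector [t, ff t]"

lemma gg_comp [simp]: "gg t $ 1 = t" "gg t $ 2 = ff t"
  unfolding gg_def by simp_all

lemma gg_eq: "gg t = t *\<^sub>R axis 1 1 + ff t *\<^sub>R axis 2 1"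
  by (simp add: vec_eq_iff forall_2 axis_def)

lemma gg_cont: "continuous_on S gg"
proof -
  have "continuous_on S ff" using ff_cont continuous_on_subset by blast
  then show ?thesis unfolding gg_eq[abs_def] by (intro continuous_intros)
qed

lemma path_gg: "path gg" unfolding path_def by (rule gg_cont)

lemma norm_gg_diff: "norm (gg x - gg y) \<le> \<bar>x - y\<bar> + \<bar>ff x - ff y\<bar>"
  using sqrt_sum_squares_le_sum_abs[of "x - y" "ff x - ff y"] by (simp add: norm2)

lemma norm_gg_diff_ge: "\<bar>x - y\<bar> \<le> norm (gg x - gg y)"
  using component_le_norm_cart[of "gg x - gg y" 1] by simp

lemma ff_vert:
  fixes i j :: nat
  defines "p \<equiv> real i / 2^j" and "q \<equiv> (real i + 1) / 2^j" and "m \<equiv> (2 * real i + 1) / 2^(Suc j)"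
  shows "ff q - ff p = sl j i / 2^j" "ff m - ff p = (sl j i + aa j) / 2^(Suc j)"
proof -
  have qd: "q = real (i+1) / 2^j" unfolding q_def by simp
  have md: "m = real (2*i+1) / 2^(Suc j)" unfolding m_def by simp
  have pq: "p \<le> q" unfolding p_def q_def by (simp add: divide_right_mono)
  have pm: "p \<le> m" "m \<le> q" unfolding p_def q_def m_def by (simp_all add: field_simps)
  have "ff q - ff p = fJ j q - fJ j p" unfolding p_def qd by (simp only: ff_dyadic)
  also have "\<dots> = sl j i * (q - p)"
    by (rule fJ_affine) (use pq in \<open>auto simp: p_def q_def\<close>)
  also have "q - p = 1 / 2^j" unfolding p_def q_def by (simp add: field_simps)
  finally show "ff q - ff p = sl j i / 2^j" by simp
  have "ff m = fJ (Suc j) m" unfolding md by (simp only: ff_dyadic)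
  also have "\<dots> = fJ j m + tm j m" by (rule fJ_Suc)
  finally have fm: "ff m = fJ j m + tm j m" .
  have "fJ j m - fJ j p = sl j i * (m - p)"
    by (rule fJ_affine) (use pm in \<open>auto simp: p_def q_def\<close>)
  moreover have "m - p = 1 / 2^(Suc j)" unfolding p_def m_def by (simp add: field_simps)
  moreover have "tm j m = aa j / 2^(Suc j)"
  proof -
    have "(2::real)^j * m = real i + 1/2" unfolding m_def by (simp add: field_simps)
    moreover have "TT (real i + 1/2) = 1/2" by (rule TT_up) auto
    ultimately have t: "TT (2^j * m) = 1/2" by simp
    show ?thesis unfolding tm_def t by simp
  qed
  moreover have "ff p = fJ j p" unfolding p_def by (rule ff_dyadic)
  ultimately show "ff m - ff p = (sl j i + aa j) / 2^(Suc j)" using fm by (simp add: field_simps)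
qed

lemma vert_geom:
  fixes i j :: nat
  defines "p \<equiv> real i / 2^j" and "q \<equiv> (real i + 1) / 2^j" and "m \<equiv> (2 * real i + 1) / 2^(Suc j)"
  shows "det2 (gg q - gg p) (gg m - gg p) = aa j / 2 / 4^j"
    "norm (gg q - gg p) \<le> (1 + \<bar>sl j i\<bar>) / 2^j"
    "norm (gg m - gg p) \<le> (2 + \<bar>sl j i\<bar>) / 2^j"
proof -
  note v = ff_vert[of i j, folded p_def q_def m_def]
  have qp: "q - p = 1 / 2^j" unfolding p_def q_def by (simp add: field_simps)
  have mp: "m - p = 1 / 2^(Suc j)" unfolding p_def m_def by (simp add: field_simps)
  show "det2 (gg q - gg p) (gg m - gg p) = aa j / 2 / 4^j"
  proof -
    have "det2 (gg q - gg p) (gg m - gg p) = (q - p)*(ff m - ff p) - (ff q - ff p)*(m - p)"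
      unfolding det2_def by simp
    also have "\<dots> = (1/2^j)*((sl j i + aa j)/2^(Suc j)) - (sl j i/2^j)*(1/2^(Suc j))"
      using v qp mp by simp
    also have "\<dots> = aa j / (2^j * 2^(Suc j))" by (simp add: field_simps)
    also have "(2::real)^j * 2^(Suc j) = 2 * 4^j"
      by (simp flip: power_mult_distrib)
    finally show ?thesis by simp
  qed
  show "norm (gg q - gg p) \<le> (1 + \<bar>sl j i\<bar>) / 2^j"
    using norm_gg_diff[of q p] v qp by (simp add: abs_divide add_divide_distrib)
  have "norm (gg m - gg p) \<le> 1 / 2^(Suc j) + \<bar>sl j i + aa j\<bar> / 2^(Suc j)"
    using norm_gg_diff[of m p] v mp by (simp add: abs_divide)
  also have "\<dots> = (1 + \<bar>sl j i + aa j\<bar>) / 2^(Suc j)" by (simp add: add_divide_distrib)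
  also have "\<dots> \<le> (2 * (2 + \<bar>sl j i\<bar>)) / 2^(Suc j)"
    using aa_pos[of j] aa_le1[of j] abs_triangle_ineq[of "sl j i" "aa j"]
    by (intro divide_right_mono) auto
  also have "\<dots> = (2 + \<bar>sl j i\<bar>) / 2^j" by (simp add: field_simps)
  finally show "norm (gg m - gg p) \<le> (2 + \<bar>sl j i\<bar>) / 2^j" .
qed


lemma piece_bound:
  assumes "real i / 2^J \<le> x" "x \<le> (real i + 1) / 2^J" "real i / 2^J \<le> y" "y \<le> (real i + 1) / 2^J"
  shows "norm (gg x - gg y) \<le> (2 + \<bar>sl J i\<bar>) / 2^J"
proof -
  have xy: "\<bar>x - y\<bar> \<le> 1 / 2^J" using assms by (simp add: abs_le_iff field_simps)
  have "ff x - ff y = (fJ J x - fJ J y) + ((\<Sum>l. tm (l + J) x) - (\<Sum>l. tm (l + J) y))"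
    using ff_split[of x J] ff_split[of y J] by simp
  also have "fJ J x - fJ J y = sl J i * (x - y)" by (rule fJ_affine[OF assms])
  finally have e: "ff x - ff y = sl J i * (x - y) + ((\<Sum>l. tm (l + J) x) - (\<Sum>l. tm (l + J) y))" .
  have tb: "\<bar>(\<Sum>l. tm (l + J) x) - (\<Sum>l. tm (l + J) y)\<bar> \<le> (1/2)^J"
    using tail_bounds[of J x] tail_bounds[of J y] by (simp add: abs_le_iff)
  have "\<bar>ff x - ff y\<bar> \<le> \<bar>sl J i * (x - y)\<bar> + \<bar>(\<Sum>l. tm (l + J) x) - (\<Sum>l. tm (l + J) y)\<bar>"
    unfolding e by (rule abs_triangle_ineq)
  then have "\<bar>ff x - ff y\<bar> \<le> \<bar>sl J i\<bar> * \<bar>x - y\<bar> + (1/2)^J"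
    using tb by (simp add: abs_mult)
  also have "\<dots> \<le> \<bar>sl J i\<bar> * (1 / 2^J) + 1/2^J"
    using xy by (intro add_mono mult_left_mono) (auto simp: power_divide)
  finally have "\<bar>ff x - ff y\<bar> \<le> \<bar>sl J i\<bar> * (1 / 2^J) + 1/2^J" .
  then have "norm (gg x - gg y) \<le> 1 / 2^J + (\<bar>sl J i\<bar> * (1 / 2^J) + 1/2^J)"
    using norm_gg_diff[of x y] xy by linarith
  also have "\<dots> = (2 + \<bar>sl J i\<bar>) / 2^J" by (simp add: field_simps)
  finally show ?thesis .
qed

lemma abs_le_sq: "\<bar>s::real\<bar> \<le> 1 + s^2"
proof (cases "\<bar>s\<bar> \<le> 1")
  case True then show ?thesis by (simp add: add_increasing2)
next
  case False
  then have "\<bar>s\<bar> * 1 \<le> \<bar>s\<bar> * \<bar>s\<bar>" by (intro mult_left_mono) auto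
  then show ?thesis by (simp add: power2_eq_square)
qed

lemma cover_index:
  assumes "0 \<le> t" "t \<le> 1"
  shows "\<exists>i<2^J. real i / 2^J \<le> t \<and> t \<le> (real i + 1) / 2^J"
proof (cases "t = 1")
  case True
  have "(1::nat) \<le> 2^J" by simp
  then have r: "real (2^J - 1) = 2^J - 1" by (simp add: of_nat_diff)
  show ?thesis using True by (intro exI[of _ "2^J - 1"]) (auto simp: r field_simps)
next
  case False
  define k where "k = \<lfloor>t * 2^J\<rfloor>"
  have k0: "0 \<le> k" unfolding k_def using assms by simp
  have k1: "of_int k \<le> t * 2^J" "t * 2^J < of_int k + 1" unfolding k_def by linarith+
  have "t * 2^J < 2^J" using assms False by simp
  then have "real_of_int k < 2^J" using k1 by linarith
  then have "real_of_int k < real_of_int (2^J)" by simp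
  then have "k < 2^J" by (simp only: of_int_less_iff)
  then have kl: "nat k < 2^J" using k0 by (simp add: nat_less_iff)
  have rk: "real (nat k) = of_int k" using k0 by simp
  show ?thesis
    by (intro exI[of _ "nat k"]) (use kl k1 in \<open>auto simp: rk field_simps\<close>)
qed

lemma hausdorff_gg: "hausdorff1 (path_image gg) \<le> 5"
  unfolding hausdorff1_def
proof (rule SUP_least)
  fix \<delta> :: real assume "\<delta> \<in> {0<..}"
  then have \<delta>: "\<delta> > 0" by simp
  have "(\<lambda>J::nat. (2 + real J)/2^J) \<longlonglongrightarrow> 0" by real_asymp
  from order_tendstoD(2)[OF this \<delta>] obtain J where J: "(2 + real J)/2^J < \<delta>"
    by (auto simp: eventually_sequentially)
  define U where "U i = (if i < 2^J then gg ` {real i / 2^J .. (real i + 1) / 2^J} else {})" for i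
  have bU: "bounded (U i)" for i
    unfolding U_def by (auto intro!: compact_imp_bounded compact_continuous_image gg_cont)
  have dU: "diameter (U i) \<le> (if i < 2^J then (2 + \<bar>sl J i\<bar>) / 2^J else 0)" for i
    unfolding U_def by (auto intro!: diameter_le piece_bound)
  have dU2: "diameter (U i) \<le> \<delta>" for i
  proof -
    have "(2 + \<bar>sl J i\<bar>) / 2^J \<le> (2 + real J)/2^J"
      using sl_bound[of J i] by (intro divide_right_mono) auto
    then show ?thesis using dU[of i] J \<delta> by (auto split: if_splits)
  qed
  have cov: "path_image gg \<subseteq> (\<Union>i. U i)"
  proof
    fix z assume "z \<in> path_image gg"
    then obtain t where t: "0 \<le> t" "t \<le> 1" "z = gg t" unfolding path_image_def by auto
    obtain i where "i < 2^J" "real i / 2^J \<le> t" "t \<le> (real i + 1) / 2^J"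
      using cover_index[OF t(1,2)] by blast
    then show "z \<in> (\<Union>i. U i)" unfolding U_def using t(3) by auto
  qed
  have "hausdorff_pre1 \<delta> (path_image gg) \<le> (\<Sum>i. ennreal (diameter (U i)))"
    unfolding hausdorff_pre1_def by (rule INF_lower) (use cov bU dU2 in auto)
  also have "(\<Sum>i. ennreal (diameter (U i))) = (\<Sum>i<2^J. ennreal (diameter (U i)))"
    by (rule suminf_finite) (auto simp: U_def)
  also have "\<dots> = ennreal (\<Sum>i<2^J. diameter (U i))"
    by (rule sum_ennreal) (simp add: diameter_ge_0 bU)
  also have "\<dots> \<le> ennreal 5"
  proof (rule ennreal_leI)
    have "(\<Sum>i<2^J. diameter (U i)) \<le> (\<Sum>i<(2::nat)^J. (3 + (sl J i)^2) / 2^J)"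
    proof (rule sum_mono)
      fix i assume "i \<in> {..<(2::nat)^J}"
      then have "diameter (U i) \<le> (2 + \<bar>sl J i\<bar>) / 2^J" using dU[of i] by simp
      also have "\<dots> \<le> (3 + (sl J i)^2) / 2^J"
        using abs_le_sq[of "sl J i"] by (intro divide_right_mono) auto
      finally show "diameter (U i) \<le> (3 + (sl J i)^2) / 2^J" .
    qed
    also have "\<dots> = 3 + (\<Sum>i<(2::nat)^J. (sl J i)^2) / 2^J"
      by (simp add: sum_divide_distrib[symmetric] sum.distrib add_divide_distrib)
    also have "\<dots> = 3 + (\<Sum>l<J. (aa l)^2)" by (simp add: sl_sq_sum)
    also have "\<dots> \<le> 5" using aa_sq_sum[of J] by simp
    finally show "(\<Sum>i<2^J. diameter (U i)) \<le> 5" .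
  qed
  finally show "hausdorff_pre1 \<delta> (path_image gg) \<le> 5" by simp
qed


lemma pow_kk: "(2::real) powr (- real_of_int (int j - int d)) = 2^d / 2^j"
proof -
  have "- real_of_int (int j - int d) = real d - real j" by simp
  then show ?thesis by (simp add: powr_diff powr_realpow)
qed

lemma card_good:
  "2^j \<le> 2 * real (card {i. i < (2::nat)^j \<and> \<bar>sl j i\<bar> \<le> 2})"
proof -
  define G where "G = {i. i < (2::nat)^j \<and> \<bar>sl j i\<bar> \<le> 2}"
  define B where "B = {i. i < (2::nat)^j \<and> \<not> \<bar>sl j i\<bar> \<le> 2}"
  have un: "{..<(2::nat)^j} = G \<union> B" "G \<inter> B = {}" unfolding G_def B_def by auto
  have fin: "finite G" "finite B" unfolding G_def B_def by auto
  have "card (G \<union> B) = 2^j" unfolding un(1)[symmetric] by simp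
  then have c: "card G + card B = 2^j" using card_Un_disjoint[OF fin un(2)] by simp
  have "4 * real (card B) = (\<Sum>i\<in>B. 4)" by simp
  also have "\<dots> \<le> (\<Sum>i\<in>B. (sl j i)^2)"
  proof (rule sum_mono)
    fix i assume "i \<in> B"
    then have "2 < \<bar>sl j i\<bar>" unfolding B_def by auto
    then have "2 * 2 \<le> \<bar>sl j i\<bar> * \<bar>sl j i\<bar>" by (intro mult_mono) auto
    then show "4 \<le> (sl j i)^2" by (simp add: power2_eq_square)
  qed
  also have "\<dots> \<le> (\<Sum>i<(2::nat)^j. (sl j i)^2)"
    by (rule sum_mono2) (auto simp: B_def)
  also have "\<dots> \<le> 2^j * 2" unfolding sl_sq_sum using aa_sq_sum[of j] by (intro mult_left_mono) auto
  finally have "2 * real (card B) \<le> 2^j" by simp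
  moreover have "real (card G) + real (card B) = 2^j" using c by (metis of_nat_add of_nat_numeral of_nat_power)
  ultimately show ?thesis unfolding G_def[symmetric] by linarith
qed

lemma card_fiber:
  fixes F :: "nat set" and K :: nat
  assumes "\<And>i i'. i \<in> F \<Longrightarrow> i' \<in> F \<Longrightarrow> i' < i + K" "finite F"
  shows "card F \<le> K"
proof (cases "F = {}")
  case True then show ?thesis by simp
next
  case False
  define i0 where "i0 = Min F"
  have "i0 \<in> F" unfolding i0_def using False assms(2) by simp
  have "F \<subseteq> {i0..<i0 + K}"
  proof
    fix i assume "i \<in> F"
    then have "i0 \<le> i" unfolding i0_def using assms(2) by simp
    moreover have "i < i0 + K" using assms(1)[OF \<open>i0 \<in> F\<close> \<open>i \<in> F\<close>] .
    ultimately show "i \<in> {i0..<i0 + K}" by simp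
  qed
  then have "card F \<le> card {i0..<i0 + K}" by (intro card_mono) auto
  then show ?thesis by simp
qed

lemma main_sum:
  fixes A r :: real and X :: "int \<Rightarrow> plane set"
  assumes A: "A > 1" and X: "nested_nets (path_image gg) X" and r: "0 < r" "r < 2"
  shows "S_sum (path_image gg) r A X = \<infinity>"
proof -
  define E where "E = path_image gg"
  obtain d :: nat where d: "4/(A-1) < 2^d" using real_arch_pow[of 2 "4/(A-1)"] by auto
  have "4 < 2^d * (A - 1)" using d A by (simp add: divide_less_eq)
  then have d4: "4 \<le> (A - 1) * 2^d" by (simp add: mult.commute)
  define C where "C = 1 / (56 * A * 2^d)"
  have C: "C > 0" unfolding C_def using A by simp
  define kk where "kk j = int j - int d" for j :: nat
  define G where "G j = {i. i < (2::nat)^j \<and> \<bar>sl j i\<bar> \<le> 2}" for j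
  define pt where "pt j i = gg (real i / 2^j)" for j i :: nat
  define ys where "ys j i = (SOME y. y \<in> X (kk j) \<and> dist (pt j i) y < 2^d/2^j)" for j i :: nat
  define tf where "tf = (\<lambda>(k, x). jones_beta E (cball x (A * 2 powr (- real_of_int k))) powr r
                 * diameter (cball x (A * 2 powr (- real_of_int k))))"
  have tf_nn: "0 \<le> tf z" for z
    unfolding tf_def by (auto split: prod.split simp: diameter_cball)
  have ptE: "pt j i \<in> E" if "i < 2^j" for i j
  proof -
    have "i \<le> 2^j" using that by simp
    then have "real i \<le> real (2^j)" by (simp only: of_nat_le_iff)
    then have "real i \<le> 2^j" by simp
    then have "real i / 2^j \<in> {0..1}" by (simp add: divide_le_eq)
    then show ?thesis unfolding pt_def E_def path_image_def by blast
  qed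
  have ys: "ys j i \<in> X (kk j) \<and> dist (pt j i) (ys j i) < 2^d/2^j" if "i < 2^j" for i j
  proof -
    have "is_net (2 powr (- real_of_int (kk j))) E (X (kk j))"
      using X unfolding nested_nets_def E_def by blast
    then have "\<exists>y\<in>X (kk j). dist (pt j i) y < 2^d/2^j"
      using ptE[OF that] unfolding is_net_def kk_def pow_kk by blast
    then have "\<exists>y. y \<in> X (kk j) \<and> dist (pt j i) y < 2^d/2^j" by blast
    then show ?thesis unfolding ys_def by (rule someI_ex)
  qed
  have rad: "A * 2 powr (- real_of_int (kk j)) = A * 2^d / 2^j" for j unfolding kk_def pow_kk by simp
  have term_lb: "(C * aa j) powr r * (2 * A * 2^d / 2^j) \<le> tf (kk j, ys j i)" if iG: "i \<in> G j" for i j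
  proof -
    have i: "i < 2^j" "\<bar>sl j i\<bar> \<le> 2" using iG unfolding G_def by auto
    define p where "p = real i / 2^j"
    define q where "q = (real i + 1) / 2^j"
    define m where "m = (2 * real i + 1) / 2^(Suc j)"
    define y where "y = ys j i"
    define \<rho> where "\<rho> = A * 2^d / 2^j"
    have \<rho>: "\<rho> > 0" unfolding \<rho>_def using A by simp
    note vg = vert_geom[of i j, folded p_def q_def m_def]
    have "(1 + \<bar>sl j i\<bar>) / 2^j \<le> 3 / 2^j" by (rule divide_right_mono) (use i(2) in auto)
    then have pq: "norm (gg q - gg p) \<le> 3 / 2^j" using vg(2) by linarith
    have "(2 + \<bar>sl j i\<bar>) / 2^j \<le> 4 / 2^j" by (rule divide_right_mono) (use i(2) in auto)
    then have pm: "norm (gg m - gg p) \<le> 4 / 2^j" using vg(3) by linarith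
    have yp: "dist y (gg p) < 2^d / 2^j" using ys[OF i(1)] unfolding y_def pt_def p_def by (simp add: dist_commute)
    have "2^d / 2^j \<le> \<rho>" unfolding \<rho>_def using A by (simp add: divide_right_mono)
    then have inp: "gg p \<in> cball y \<rho>" using yp by simp
    have lim: "2^d / 2^j + 4 / 2^j \<le> \<rho>"
    proof -
      have "2^d + 4 \<le> A * 2^d" using d4 by (simp add: algebra_simps)
      then have "(2^d + 4) / 2^j \<le> A * 2^d / 2^j" by (rule divide_right_mono) simp
      then show ?thesis unfolding \<rho>_def by (simp add: add_divide_distrib)
    qed
    have "3 / 2^j \<le> (4::real) / 2^j" by (rule divide_right_mono) auto
    then have inq: "gg q \<in> cball y \<rho>"
      using dist_triangle[of y "gg q" "gg p"] yp pq lim by (simp add: dist_norm norm_minus_commute)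
    have inm: "gg m \<in> cball y \<rho>"
      using dist_triangle[of y "gg m" "gg p"] yp pm lim by (simp add: dist_norm norm_minus_commute)
    have pE: "gg p \<in> E" using ptE[OF i(1)] unfolding pt_def p_def .
    have qE: "gg q \<in> E"
    proof -
      have "i + 1 \<le> 2^j" using i(1) by simp
      then have "real (i + 1) \<le> real (2^j)" by (simp only: of_nat_le_iff)
      then have "real i + 1 \<le> 2^j" by simp
      then have "q \<in> {0..1}" unfolding q_def by (simp add: divide_le_eq)
      then show ?thesis unfolding E_def path_image_def by blast
    qed
    have mE: "gg m \<in> E"
    proof -
      have "i + 1 \<le> 2^j" using i(1) by simp
      then have "real (i + 1) \<le> real (2^j)" by (simp only: of_nat_le_iff)
      then have "real i + 1 \<le> 2^j" by simp
      then have "m \<in> {0..1}" unfolding m_def by (simp add: divide_le_eq)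
      then show ?thesis unfolding E_def path_image_def by blast
    qed
    have b: "(aa j / 2 / 4^j) / (2 * (7 / 2^j)) / (2 * \<rho>) \<le> jones_beta E (cball y \<rho>)"
      by (rule beta_lower[OF pE qE mE inp inq inm \<rho>]) (use vg(1) pq pm aa_pos[of j] in \<open>auto simp: add_divide_distrib[symmetric]\<close>)
    have "(aa j / 2 / 4^j) / (2 * (7 / 2^j)) / (2 * \<rho>) = C * aa j"
    proof -
      have "(4::real)^j = 2^j * 2^j" by (simp flip: power_mult_distrib)
      then show ?thesis unfolding C_def \<rho>_def by (simp add: field_simps)
    qed
    with b have b2: "C * aa j \<le> jones_beta E (cball y \<rho>)" by simp
    have "(C * aa j) powr r \<le> jones_beta E (cball y \<rho>) powr r"
      using b2 C aa_pos[of j] r by (intro powr_mono2) auto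
    then have "(C * aa j) powr r * (2 * \<rho>) \<le> jones_beta E (cball y \<rho>) powr r * (2 * \<rho>)"
      using \<rho> by (intro mult_right_mono) auto
    moreover have "tf (kk j, y) = jones_beta E (cball y \<rho>) powr r * (2 * \<rho>)"
    proof -
      have "tf (kk j, y) = jones_beta E (cball y \<rho>) powr r * diameter (cball y \<rho>)"
        unfolding tf_def using rad[of j] by (simp add: \<rho>_def)
      then show ?thesis using \<rho> by simp
    qed
    ultimately show ?thesis unfolding y_def[symmetric] by (simp add: \<rho>_def mult.assoc)
  qed
  have fiber: "i' < i + 2^(Suc d)" if "i \<in> G j" "i' \<in> G j" "ys j i = ys j i'" for i i' j
  proof -
    have i: "i < 2^j" "i' < 2^j" using that unfolding G_def by auto
    have "dist (pt j i) (pt j i') < 2 * (2^d / 2^j)"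
      using ys[OF i(1)] ys[OF i(2)] dist_triangle[of "pt j i" "pt j i'" "ys j i"] that(3)
      by (simp add: dist_commute)
    moreover have "\<bar>real i / 2^j - real i' / 2^j\<bar> \<le> dist (pt j i) (pt j i')"
      unfolding pt_def dist_norm by (rule norm_gg_diff_ge)
    moreover have "\<bar>real i / 2^j - real i' / 2^j\<bar> = \<bar>real i - real i'\<bar> / 2^j"
      by (simp add: diff_divide_distrib[symmetric])
    ultimately have "\<bar>real i - real i'\<bar> / 2^j < 2 * 2^d / 2^j" by simp
    then have "\<bar>real i - real i'\<bar> < 2 * 2^d" by (simp add: divide_less_eq)
    then have "real i' < real i + 2^(Suc d)" by simp
    then have "real i' < real (i + 2^(Suc d))" by simp
    then show ?thesis by (simp only: of_nat_less_iff)
  qed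
  have cardY: "real (card (G j)) \<le> 2^(Suc d) * real (card (ys j ` G j))" for j
  proof -
    have finG: "finite (G j)" unfolding G_def by auto
    have "G j \<subseteq> (\<Union>y\<in>ys j ` G j. {i \<in> G j. ys j i = y})" by auto
    then have "card (G j) \<le> card (\<Union>y\<in>ys j ` G j. {i \<in> G j. ys j i = y})"
      using finG by (intro card_mono) auto
    also have "\<dots> \<le> (\<Sum>y\<in>ys j ` G j. card {i \<in> G j. ys j i = y})"
      using finG by (intro card_UN_le) auto
    also have "\<dots> \<le> (\<Sum>y\<in>ys j ` G j. 2^(Suc d))"
    proof (rule sum_mono)
      fix y assume "y \<in> ys j ` G j"
      show "card {i \<in> G j. ys j i = y} \<le> 2^(Suc d)"
        by (rule card_fiber) (use finG fiber in auto)
    qed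
    also have "\<dots> = 2^(Suc d) * card (ys j ` G j)" by simp
    finally have "card (G j) \<le> 2^(Suc d) * card (ys j ` G j)" .
    then have "real (card (G j)) \<le> real (2^(Suc d) * card (ys j ` G j))" by (simp only: of_nat_le_iff)
    then show ?thesis by simp
  qed
  have level: "(1/2) * (C * aa j) powr r \<le> (\<Sum>y\<in>ys j ` G j. tf (kk j, y))" for j
  proof -
    define v where "v = (C * aa j) powr r * (2 * A * 2^d / 2^j)"
    have v0: "0 \<le> v" unfolding v_def using A by simp
    have "real (card (ys j ` G j)) * v \<le> (\<Sum>y\<in>ys j ` G j. tf (kk j, y))"
    proof -
      have "(\<Sum>y\<in>ys j ` G j. v) \<le> (\<Sum>y\<in>ys j ` G j. tf (kk j, y))"
        using term_lb unfolding v_def by (intro sum_mono) auto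
      then show ?thesis by simp
    qed
    moreover have "(1/2) * (C * aa j) powr r \<le> real (card (ys j ` G j)) * v"
    proof -
      have c1: "2^j \<le> 2 * (2^(Suc d) * real (card (ys j ` G j)))"
        using card_good[of j] cardY[of j] unfolding G_def by linarith
      have "1 * ((1/2) * (C * aa j) powr r) \<le> A * ((1/2) * (C * aa j) powr r)"
        using A by (intro mult_right_mono) auto
      then have "(1/2) * (C * aa j) powr r \<le> A * (1/2) * (C * aa j) powr r" by (simp add: mult.assoc)
      also have "\<dots> = (2^j / (2 * 2^(Suc d))) * (C * aa j) powr r * (2 * A * 2^d / 2^j)"
        by (simp add: field_simps)
      also have "\<dots> \<le> real (card (ys j ` G j)) * (C * aa j) powr r * (2 * A * 2^d / 2^j)"
        using A c1 by (intro mult_right_mono) (auto simp: divide_le_eq mult_ac)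
      finally show ?thesis unfolding v_def by (simp add: mult.assoc)
    qed
    ultimately show ?thesis by linarith
  qed
  define FF where "FF N = (\<Union>j\<in>{..<N}. (\<lambda>y. (kk j, y)) ` (ys j ` G j))" for N
  have finFF: "finite (FF N)" for N unfolding FF_def G_def by auto
  have subFF: "FF N \<subseteq> Sigma UNIV X" for N
    unfolding FF_def G_def using ys by auto
  have total: "(\<Sum>j<N. (1/2) * (C * aa j) powr r) \<le> sum tf (FF N)" for N
  proof -
    have inj: "inj kk" unfolding kk_def inj_def by auto
    have "sum tf (FF N) = (\<Sum>j<N. sum tf ((\<lambda>y. (kk j, y)) ` (ys j ` G j)))"
      unfolding FF_def
      by (rule sum.UNION_disjoint) (use inj in \<open>auto simp: G_def inj_def\<close>)
    also have "\<dots> = (\<Sum>j<N. (\<Sum>y\<in>ys j ` G j. tf (kk j, y)))"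
      by (intro sum.cong refl, subst sum.reindex) (auto simp: inj_on_def)
    finally show ?thesis using level by (simp add: sum_mono)
  qed
  have eq: "S_sum E r A X = ennreal (diameter E) + infsum (\<lambda>z. ennreal (tf z)) (Sigma UNIV X)"
    unfolding S_sum_def tf_def by (simp add: case_prod_unfold)
  have "\<forall>B. ennreal B \<le> S_sum E r A X"
  proof
    fix B
    obtain N where N: "2 * B \<le> (\<Sum>j<N. (C * aa j) powr r)" using diverge[OF r C] by blast
    have "B \<le> (\<Sum>j<N. (1/2) * (C * aa j) powr r)" using N by (simp add: sum_divide_distrib[symmetric])
    also have "\<dots> \<le> sum tf (FF N)" by (rule total)
    finally have "ennreal B \<le> ennreal (sum tf (FF N))" by (rule ennreal_leI)
    also have "\<dots> = (\<Sum>z\<in>FF N. ennreal (tf z))" by (rule sum_ennreal[symmetric]) (use tf_nn in auto)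
    also have "\<dots> = infsum (\<lambda>z. ennreal (tf z)) (FF N)" by (rule infsum_finite[symmetric, OF finFF])
    also have "\<dots> \<le> infsum (\<lambda>z. ennreal (tf z)) (Sigma UNIV X)"
      by (rule infsum_mono_neutral[OF nonneg_summable_on_complete nonneg_summable_on_complete]) (use subFF in auto)
    also have "\<dots> \<le> S_sum E r A X" unfolding eq by simp
    finally show "ennreal B \<le> S_sum E r A X" .
  qed
  then have "S_sum E r A X = \<infinity>"
  proof (rule contrapos_pp)
    assume "S_sum E r A X \<noteq> \<infinity>"
    then obtain s where s: "S_sum E r A X = ennreal s" "0 \<le> s" by (cases "S_sum E r A X" rule: ennreal_cases) auto
    show "\<not> (\<forall>B. ennreal B \<le> S_sum E r A X)"
    proof
      assume "\<forall>B. ennreal B \<le> S_sum E r A X"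
      then have "ennreal (s + 1) \<le> ennreal s" using s by metis
      then show False using s(2) by (simp add: ennreal_le_iff)
    qed
  qed
  then show ?thesis unfolding E_def .
qed


theorem mainTheorem7:
  shows "\<exists>g :: real \<Rightarrow> plane. path g \<and> hausdorff1 (path_image g) < \<infinity> \<and>
     (\<forall>A X \<epsilon>. A > 1 \<longrightarrow> nested_nets (path_image g) X \<longrightarrow> 0 < \<epsilon> \<longrightarrow> \<epsilon> < 2 \<longrightarrow>
        S_sum (path_image g) (2 - \<epsilon>) A X = \<infinity>)"
proof (intro exI[of _ gg] conjI allI impI)
  show "path gg" by (rule path_gg)
  have "(5::ennreal) < \<infinity>" by simp
  then show "hausdorff1 (path_image gg) < \<infinity>" using hausdorff_gg by (rule le_less_trans[rotated])
next
  fix A :: real and X :: "int \<Rightarrow> plane set" and \<epsilon> :: real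
  assume "A > 1" "nested_nets (path_image gg) X" "0 < \<epsilon>" "\<epsilon> < 2"
  then show "S_sum (path_image gg) (2 - \<epsilon>) A X = \<infinity>" by (intro main_sum) auto
qed

end
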